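(* A map $f \colon Y \to X$ in $\widehat{\square}_\vee$ has the right lifting property against all maps $\delta_k \hat{\times} m$ ($k \in \{0,1\}$, $m$ a monomorphism) if and only if it is an unbiased fibration, i.e. it has the right lifting property against $r \hat{\times}_B m$ for all $r \colon B \to \mathbb{I}$ and all monomorphisms $m \colon A \rightarrowtail B$.
   Context: Semilattices: sets with an associative, commutative, idempotent binary operation $\vee$; homomorphisms preserve $\vee$. Let $\square_\vee$ be the category whose objects are the semilattices $[1]^n$ ($n\in\mathbb{N}$, $[1]=\{0<1\}$ with $\vee=\max$, pointwise structure) and whose morphisms are all semilattice homomorphisms between them. Fix a strongly inaccessible cardinal $\kappa$ and let $\widehat{\square}_\vee$ be the category of presheaves on $\square_\vee$ valued in $\kappa$-small sets. $\mathbb{I}$ is the representable presheaf on $[1]$, $\delta_k \colon 1 \to \mathbb{I}$ the endpoint inclusions. For $f\colon X\to Y$, $g\colon X'\to Y'$, the pushout product $f\hat\times g$ is the induced map $(X\times Y')\sqcup_{X\times X'}(Y\times X')\to Y\times Y'$. For $r\colon B\to\mathbb I$ and a mono $m\colon A\to B$, $M_r(m)$ is the pushout of $m$ and $\langle rm,\mathrm{id}_A\rangle\colon A\to\mathbb I\times A$, and $r\hat\times_B m\colon M_r(m)\to\mathbb I\times B$ is the unique map restricting to $\langle r,\mathrm{id}_B\rangle$ on $B$ and to $\mathbb I\times m$ on $\mathbb I\times A$. *)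

theory Defs
  imports Main "HOL-Library.FuncSet"
begin

text \<open>[1]^n is modelled as the powerset of {..<n}, with \<vee> = union (pointwise max).\<close>

definition Cube :: "nat \<Rightarrow> nat set set" where
  "Cube n = Pow {..<n}"

definition hom :: "nat \<Rightarrow> nat \<Rightarrow> (nat set \<Rightarrow> nat set) set" where
  "hom m n = {\<phi> \<in> Cube m \<rightarrow>\<^sub>E Cube n.
                 \<forall>x\<in>Cube m. \<forall>y\<in>Cube m. \<phi> (x \<union> y) = \<phi> x \<union> \<phi> y}"

text \<open>psh_act X m n \<phi> : X n \<rightarrow> X m for \<phi> \<in> hom m n.\<close>
record 'a psh =
  psh_obj :: "nat \<Rightarrow> 'a set"
  psh_act :: "nat \<Rightarrow> nat \<Rightarrow> (nat set \<Rightarrow> nat set) \<Rightarrow> 'a \<Rightarrow> 'a"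

definition is_psh :: "'a psh \<Rightarrow> bool" where
  "is_psh X \<longleftrightarrow>
     (\<forall>m n \<phi> x. \<phi> \<in> hom m n \<longrightarrow> x \<in> psh_obj X n \<longrightarrow> psh_act X m n \<phi> x \<in> psh_obj X m) \<and>
     (\<forall>n x. x \<in> psh_obj X n \<longrightarrow> psh_act X n n (restrict id (Cube n)) x = x) \<and>
     (\<forall>k m n \<phi> \<psi> x. \<phi> \<in> hom m n \<longrightarrow> \<psi> \<in> hom k m \<longrightarrow> x \<in> psh_obj X n \<longrightarrow>
        psh_act X k m \<psi> (psh_act X m n \<phi> x) = psh_act X k n (compose (Cube k) \<phi> \<psi>) x)"

text \<open>Natural transformations X \<rightarrow> Y (only values on the carriers matter).\<close>
definition is_nat :: "'a psh \<Rightarrow> 'b psh \<Rightarrow> (nat \<Rightarrow> 'a \<Rightarrow> 'b) \<Rightarrow> bool" where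
  "is_nat X Y f \<longleftrightarrow>
     (\<forall>n x. x \<in> psh_obj X n \<longrightarrow> f n x \<in> psh_obj Y n) \<and>
     (\<forall>m n \<phi> x. \<phi> \<in> hom m n \<longrightarrow> x \<in> psh_obj X n \<longrightarrow>
        f m (psh_act X m n \<phi> x) = psh_act Y m n \<phi> (f n x))"

definition is_mono :: "'a psh \<Rightarrow> 'b psh \<Rightarrow> (nat \<Rightarrow> 'a \<Rightarrow> 'b) \<Rightarrow> bool" where
  "is_mono X Y f \<longleftrightarrow> is_nat X Y f \<and> (\<forall>n. inj_on (f n) (psh_obj X n))"

definition lifts ::
  "'a psh \<Rightarrow> 'b psh \<Rightarrow> (nat \<Rightarrow> 'a \<Rightarrow> 'b) \<Rightarrow> 'c psh \<Rightarrow> 'd psh \<Rightarrow> (nat \<Rightarrow> 'c \<Rightarrow> 'd) \<Rightarrow> bool" where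
  "lifts A B i Y X p \<longleftrightarrow>
     (\<forall>u v. is_nat A Y u \<and> is_nat B X v \<and>
            (\<forall>n a. a \<in> psh_obj A n \<longrightarrow> p n (u n a) = v n (i n a)) \<longrightarrow>
        (\<exists>h. is_nat B Y h \<and>
             (\<forall>n a. a \<in> psh_obj A n \<longrightarrow> h n (i n a) = u n a) \<and>
             (\<forall>n b. b \<in> psh_obj B n \<longrightarrow> p n (h n b) = v n b)))"

definition Ipsh :: "(nat set \<Rightarrow> nat set) psh" where
  "Ipsh = \<lparr>psh_obj = (\<lambda>n. hom n 1), psh_act = (\<lambda>m n \<phi> x. compose (Cube m) x \<phi>)\<rparr>"

definition one_psh :: "unit psh" where
  "one_psh = \<lparr>psh_obj = (\<lambda>n. {()}), psh_act = (\<lambda>m n \<phi> x. x)\<rparr>"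

definition delta :: "nat \<Rightarrow> nat \<Rightarrow> unit \<Rightarrow> (nat set \<Rightarrow> nat set)" where
  "delta k = (\<lambda>n _. restrict (\<lambda>_. if k = 0 then {} else {0}) (Cube n))"

definition prod_psh :: "'a psh \<Rightarrow> 'b psh \<Rightarrow> ('a \<times> 'b) psh" where
  "prod_psh X Y = \<lparr>psh_obj = (\<lambda>n. psh_obj X n \<times> psh_obj Y n),
                   psh_act = (\<lambda>m n \<phi> (x, y). (psh_act X m n \<phi> x, psh_act Y m n \<phi> y))\<rparr>"

definition po_rel :: "'x psh \<Rightarrow> (nat \<Rightarrow> 'x \<Rightarrow> 'b) \<Rightarrow> (nat \<Rightarrow> 'x \<Rightarrow> 'c) \<Rightarrow> nat \<Rightarrow> ('b + 'c) rel" where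
  "po_rel A g h n =
     (let G = {(Inl (g n a), Inr (h n a)) | a. a \<in> psh_obj A n} in (G \<union> G\<inverse>)\<^sup>*)"

definition pushout ::
  "'x psh \<Rightarrow> 'b psh \<Rightarrow> 'c psh \<Rightarrow> (nat \<Rightarrow> 'x \<Rightarrow> 'b) \<Rightarrow> (nat \<Rightarrow> 'x \<Rightarrow> 'c) \<Rightarrow> ('b + 'c) set psh" where
  "pushout A B C g h =
     \<lparr>psh_obj = (\<lambda>n. (psh_obj B n <+> psh_obj C n) // po_rel A g h n),
      psh_act = (\<lambda>m n \<phi> c. (\<Union>x\<in>c. po_rel A g h m
                    `` {map_sum (psh_act B m n \<phi>) (psh_act C m n \<phi>) x}))\<rparr>"

definition po_copair :: "(nat \<Rightarrow> 'b \<Rightarrow> 'z) \<Rightarrow> (nat \<Rightarrow> 'c \<Rightarrow> 'z) \<Rightarrow> nat \<Rightarrow> ('b + 'c) set \<Rightarrow> 'z" where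
  "po_copair u v n c = the_elem (case_sum (u n) (v n) ` c)"

definition pp_dom ::
  "'x psh \<Rightarrow> 'y psh \<Rightarrow> (nat \<Rightarrow> 'x \<Rightarrow> 'y) \<Rightarrow> 'u psh \<Rightarrow> 'v psh \<Rightarrow> (nat \<Rightarrow> 'u \<Rightarrow> 'v)
   \<Rightarrow> (('x \<times> 'v) + ('y \<times> 'u)) set psh" where
  "pp_dom X Y f X' Y' g =
     pushout (prod_psh X X') (prod_psh X Y') (prod_psh Y X')
       (\<lambda>n (x, x'). (x, g n x')) (\<lambda>n (x, x'). (f n x, x'))"

definition pp_map ::
  "(nat \<Rightarrow> 'x \<Rightarrow> 'y) \<Rightarrow> (nat \<Rightarrow> 'u \<Rightarrow> 'v) \<Rightarrow> nat \<Rightarrow> (('x \<times> 'v) + ('y \<times> 'u)) set \<Rightarrow> 'y \<times> 'v" where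
  "pp_map f g = po_copair (\<lambda>n (x, y'). (f n x, y')) (\<lambda>n (y, x'). (y, g n x'))"

definition Mr ::
  "'a psh \<Rightarrow> 'b psh \<Rightarrow> (nat \<Rightarrow> 'b \<Rightarrow> (nat set \<Rightarrow> nat set)) \<Rightarrow> (nat \<Rightarrow> 'a \<Rightarrow> 'b)
   \<Rightarrow> ('b + ((nat set \<Rightarrow> nat set) \<times> 'a)) set psh" where
  "Mr A B r m = pushout A B (prod_psh Ipsh A) m (\<lambda>n a. (r n (m n a), a))"

definition rB_map ::
  "(nat \<Rightarrow> 'b \<Rightarrow> (nat set \<Rightarrow> nat set)) \<Rightarrow> (nat \<Rightarrow> 'a \<Rightarrow> 'b)
   \<Rightarrow> nat \<Rightarrow> ('b + ((nat set \<Rightarrow> nat set) \<times> 'a)) set \<Rightarrow> (nat set \<Rightarrow> nat set) \<times> 'b" where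
  "rB_map r m = po_copair (\<lambda>n b. (r n b, b)) (\<lambda>n (i, a). (i, m n a))"

definition rlp_delta_pp :: "'a psh \<Rightarrow> 'a psh \<Rightarrow> (nat \<Rightarrow> 'a \<Rightarrow> 'a) \<Rightarrow> bool" where
  "rlp_delta_pp Y X f \<longleftrightarrow>
     (\<forall>k \<in> {0, 1}. \<forall>(A :: 'a psh) (B :: 'a psh) m.
        is_psh A \<and> is_psh B \<and> is_mono A B m \<longrightarrow>
        lifts (pp_dom one_psh Ipsh (delta k) A B m) (prod_psh Ipsh B) (pp_map (delta k) m) Y X f)"

definition unbiased_fibration :: "'a psh \<Rightarrow> 'a psh \<Rightarrow> (nat \<Rightarrow> 'a \<Rightarrow> 'a) \<Rightarrow> bool" where
  "unbiased_fibration Y X f \<longleftrightarrow>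
     (\<forall>(A :: 'a psh) (B :: 'a psh) r m.
        is_psh A \<and> is_psh B \<and> is_nat B Ipsh r \<and> is_mono A B m \<longrightarrow>
        lifts (Mr A B r m) (prod_psh Ipsh B) (rB_map r m) Y X f)"

end

theory Submission
  imports Defs
begin

lemma enc_exists:
  assumes "infinite (UNIV :: 'a set)" and "finite (F :: 'b set)"
  shows "\<exists>e :: 'b \<times> 'a \<Rightarrow> 'a. inj_on e (F \<times> UNIV)"
proof -
  have "(card_of ((UNIV::'a set) \<times> (UNIV::'a set)), card_of (UNIV::'a set)) \<in> ordIso"
    using card_of_Times_same_infinite assms(1) by blast
  then obtain g :: "'a \<times> 'a \<Rightarrow> 'a" where g: "bij_betw g (UNIV \<times> UNIV) UNIV"
    using card_of_ordIso by blast
  obtain c0 :: "'b \<Rightarrow> nat" and k where c0: "inj_on c0 F" "c0 ` F = {i. i < k}"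
    using finite_imp_inj_to_nat_seg[OF assms(2)] by blast
  obtain s :: "nat \<Rightarrow> 'a" where s: "inj s" using infinite_countable_subset[OF assms(1)] by blast
  have "inj_on (\<lambda>(x, y). g (s (c0 x), y)) (F \<times> UNIV)"
  proof (rule inj_onI)
    fix p q assume p: "p \<in> F \<times> UNIV" and q: "q \<in> F \<times> UNIV"
      and e: "(\<lambda>(x, y). g (s (c0 x), y)) p = (\<lambda>(x, y). g (s (c0 x), y)) q"
    obtain a b a' b' where pq: "p = (a, b)" "q = (a', b')" by fastforce
    have ginj: "inj g" using g by (simp add: bij_betw_def)
    have "(s (c0 a), b) = (s (c0 a'), b')" using e pq ginj by (simp add: inj_eq)
    then have "c0 a = c0 a'" "b = b'" using s by (simp_all add: inj_eq)
    then show "p = q" using c0(1) p q pq by (simp add: inj_on_def)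
  qed
  then show ?thesis by blast
qed

lemma Cube_finite: "finite (Cube n)" by (simp add: Cube_def)

lemma hom_finite: "finite (hom m n)"
proof -
  have "hom m n \<subseteq> Cube m \<rightarrow>\<^sub>E Cube n" by (auto simp: hom_def)
  moreover have "finite (Cube m \<rightarrow>\<^sub>E Cube n)" by (intro finite_PiE) (auto simp: Cube_finite)
  ultimately show ?thesis by (rule finite_subset)
qed

lemma hom_memI:
  assumes "\<And>x. x \<in> Cube m \<Longrightarrow> \<phi> x \<in> Cube n" "\<And>x. x \<notin> Cube m \<Longrightarrow> \<phi> x = undefined"
    "\<And>x y. x \<in> Cube m \<Longrightarrow> y \<in> Cube m \<Longrightarrow> \<phi> (x \<union> y) = \<phi> x \<union> \<phi> y"
  shows "\<phi> \<in> hom m n"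
  using assms by (auto simp: hom_def)

lemma hom_mapsto: "\<phi> \<in> hom m n \<Longrightarrow> x \<in> Cube m \<Longrightarrow> \<phi> x \<in> Cube n"
  by (auto simp: hom_def)
lemma hom_ext: "\<phi> \<in> hom m n \<Longrightarrow> x \<notin> Cube m \<Longrightarrow> \<phi> x = undefined"
  by (auto simp: hom_def)
lemma hom_un: "\<phi> \<in> hom m n \<Longrightarrow> x \<in> Cube m \<Longrightarrow> y \<in> Cube m \<Longrightarrow> \<phi> (x \<union> y) = \<phi> x \<union> \<phi> y"
  by (auto simp: hom_def)

lemma Cube_un: "x \<in> Cube n \<Longrightarrow> y \<in> Cube n \<Longrightarrow> x \<union> y \<in> Cube n"
  by (auto simp: Cube_def)

lemma compose_hom: "\<phi> \<in> hom m n \<Longrightarrow> x \<in> hom n k \<Longrightarrow> compose (Cube m) x \<phi> \<in> hom m k"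
  by (rule hom_memI) (auto simp: compose_def hom_mapsto hom_un Cube_un)


lemma obj_prod[simp]: "psh_obj (prod_psh P Q) n = psh_obj P n \<times> psh_obj Q n"
  by (simp add: prod_psh_def)
lemma act_prod[simp]: "psh_act (prod_psh P Q) m n \<phi> (x, y) = (psh_act P m n \<phi> x, psh_act Q m n \<phi> y)"
  by (simp add: prod_psh_def)
lemma obj_I[simp]: "psh_obj Ipsh n = hom n 1" by (simp add: Ipsh_def)
lemma act_I[simp]: "psh_act Ipsh m n \<phi> x = compose (Cube m) x \<phi>" by (simp add: Ipsh_def)
lemma obj_one[simp]: "psh_obj one_psh n = {()}" by (simp add: one_psh_def)
lemma act_one[simp]: "psh_act one_psh m n \<phi> x = x" by (simp add: one_psh_def)
lemma is_psh_prod: "is_psh P \<Longrightarrow> is_psh Q \<Longrightarrow> is_psh (prod_psh P Q)"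
  unfolding is_psh_def
  apply (intro conjI allI impI)
    apply (clarsimp simp del: obj_prod act_prod simp add: prod_psh_def)
   apply (clarsimp simp add: prod_psh_def)
  apply (clarsimp simp add: prod_psh_def)
  done

lemma is_psh_Ipsh: "is_psh Ipsh"
  unfolding is_psh_def obj_I act_I
proof (intro conjI allI impI)
  fix m n \<phi> x assume "\<phi> \<in> hom m n" "x \<in> hom n 1"
  then show "compose (Cube m) x \<phi> \<in> hom m 1" by (rule compose_hom)
next
  fix n and x :: "nat set \<Rightarrow> nat set" assume "x \<in> hom n 1"
  then show "compose (Cube n) x (restrict id (Cube n)) = x"
    by (intro ext) (auto simp: compose_def hom_ext)
next
  fix k m n \<phi> \<psi> and x :: "nat set \<Rightarrow> nat set"
  assume "\<phi> \<in> hom m n" "\<psi> \<in> hom k m" "x \<in> hom n 1"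
  then show "compose (Cube k) (compose (Cube m) x \<phi>) \<psi> = compose (Cube k) x (compose (Cube k) \<phi> \<psi>)"
    by (intro ext) (auto simp: compose_def hom_mapsto)
qed

lemma is_psh_one: "is_psh one_psh" by (simp add: is_psh_def)

definition jn :: "nat \<Rightarrow> (nat set \<Rightarrow> nat set) \<Rightarrow> (nat set \<Rightarrow> nat set) \<Rightarrow> (nat set \<Rightarrow> nat set)" where
  "jn n i j = restrict (\<lambda>x. i x \<union> j x) (Cube n)"

lemma Cube1: "Cube (Suc 0) = {{}, {0}}" by (auto simp: Cube_def)

lemma jn_hom: "i \<in> hom n 1 \<Longrightarrow> j \<in> hom n 1 \<Longrightarrow> jn n i j \<in> hom n 1"
  by (rule hom_memI) (auto simp: jn_def hom_mapsto hom_un Cube_un)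

lemma jn_nat: "\<phi> \<in> hom m n \<Longrightarrow> compose (Cube m) (jn n i j) \<phi> = jn m (compose (Cube m) i \<phi>) (compose (Cube m) j \<phi>)"
  by (intro ext) (auto simp: jn_def compose_def hom_mapsto)

lemma delta_hom: "delta k n u \<in> hom n 1"
  by (rule hom_memI) (auto simp: delta_def Cube_def)

lemma delta_nat: "\<phi> \<in> hom m n \<Longrightarrow> compose (Cube m) (delta k n u) \<phi> = delta k m u'"
  by (intro ext) (auto simp: delta_def compose_def hom_mapsto)

lemma jn_comm: "jn n i j = jn n j i" by (intro ext) (auto simp: jn_def)

lemma jn_d0: "i \<in> hom n 1 \<Longrightarrow> jn n (delta 0 n u) i = i"
  by (intro ext) (auto simp: jn_def delta_def hom_ext)

lemma jn_d1: "i \<in> hom n 1 \<Longrightarrow> jn n (delta 1 n u) i = delta 1 n u"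
proof -
  assume i: "i \<in> hom n 1"
  have "i x \<subseteq> {0}" if "x \<in> Cube n" for x using hom_mapsto[OF i that] by (auto simp: Cube_def)
  then show ?thesis by (intro ext) (auto simp: jn_def delta_def)
qed

lemma po_equiv: "equiv UNIV (po_rel A g h n)"
  unfolding po_rel_def Let_def
  by (intro equivI refl_rtrancl sym_rtrancl trans_rtrancl) (auto simp: sym_def)

lemma po_refl: "(x, x) \<in> po_rel A g h n"
  unfolding po_rel_def Let_def by simp

lemma po_sym: "(x, y) \<in> po_rel A g h n \<Longrightarrow> (y, x) \<in> po_rel A g h n"
  using po_equiv[of A g h n] by (auto simp: equiv_def sym_def)

lemma po_trans: "(x, y) \<in> po_rel A g h n \<Longrightarrow> (y, z) \<in> po_rel A g h n \<Longrightarrow> (x, z) \<in> po_rel A g h n"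
  using po_equiv[of A g h n] by (auto simp: equiv_def elim: transE)

lemma po_gen: "a \<in> psh_obj A n \<Longrightarrow> (Inl (g n a), Inr (h n a)) \<in> po_rel A g h n"
  unfolding po_rel_def Let_def by (rule r_into_rtrancl) blast

lemma po_rel_val:
  assumes compat: "\<And>a. a \<in> psh_obj A n \<Longrightarrow> uB n (g n a) = uC n (h n a)"
    and r: "(x, y) \<in> po_rel A g h n"
  shows "case_sum (uB n) (uC n) x = case_sum (uB n) (uC n) y"
  using r unfolding po_rel_def Let_def
proof (induction rule: rtrancl_induct)
  case base then show ?case by simp
next
  case (step y z)
  then show ?case using compat by auto
qed

lemma po_rel_act:
  assumes A: "is_psh A" and g: "is_nat A B g" and h: "is_nat A C h" and phi: "\<phi> \<in> hom m n"
    and r: "(x, y) \<in> po_rel A g h n"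
  shows "(map_sum (psh_act B m n \<phi>) (psh_act C m n \<phi>) x,
          map_sum (psh_act B m n \<phi>) (psh_act C m n \<phi>) y) \<in> po_rel A g h m"
  using r unfolding po_rel_def[of A g h n] Let_def
proof (induction rule: rtrancl_induct)
  case base then show ?case by (rule po_refl)
next
  case (step y z)
  from step(2) obtain a where a: "a \<in> psh_obj A n"
    and yz: "(y = Inl (g n a) \<and> z = Inr (h n a)) \<or> (z = Inl (g n a) \<and> y = Inr (h n a))"
    by blast
  have a': "psh_act A m n \<phi> a \<in> psh_obj A m" using A a phi by (auto simp: is_psh_def)
  have gg: "psh_act B m n \<phi> (g n a) = g m (psh_act A m n \<phi> a)"
    using g a phi by (auto simp: is_nat_def)
  have hh: "psh_act C m n \<phi> (h n a) = h m (psh_act A m n \<phi> a)"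
    using h a phi by (auto simp: is_nat_def)
  have G: "(Inl (g m (psh_act A m n \<phi> a)), Inr (h m (psh_act A m n \<phi> a))) \<in> po_rel A g h m"
    using a' by (rule po_gen)
  from yz have "(map_sum (psh_act B m n \<phi>) (psh_act C m n \<phi>) y,
                 map_sum (psh_act B m n \<phi>) (psh_act C m n \<phi>) z) \<in> po_rel A g h m"
    using G po_sym gg hh by auto
  then show ?case using step(3) po_trans by blast
qed

lemma po_obj: "psh_obj (pushout A B C g h) n = (psh_obj B n <+> psh_obj C n) // po_rel A g h n"
  by (simp add: pushout_def)

lemma po_act_cls:
  assumes A: "is_psh A" and g: "is_nat A B g" and h: "is_nat A C h" and phi: "\<phi> \<in> hom m n"
  shows "psh_act (pushout A B C g h) m n \<phi> (po_rel A g h n `` {x}) =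
         po_rel A g h m `` {map_sum (psh_act B m n \<phi>) (psh_act C m n \<phi>) x}"
proof -
  let ?M = "map_sum (psh_act B m n \<phi>) (psh_act C m n \<phi>)"
  have "(\<Union>y\<in>po_rel A g h n `` {x}. po_rel A g h m `` {?M y}) = po_rel A g h m `` {?M x}"
  proof (intro equalityI subsetI)
    fix z assume "z \<in> (\<Union>y\<in>po_rel A g h n `` {x}. po_rel A g h m `` {?M y})"
    then obtain y where "(x, y) \<in> po_rel A g h n" "(?M y, z) \<in> po_rel A g h m" by auto
    then show "z \<in> po_rel A g h m `` {?M x}"
      using po_rel_act[OF A g h phi] po_trans by blast
  next
    fix z assume "z \<in> po_rel A g h m `` {?M x}"
    then show "z \<in> (\<Union>y\<in>po_rel A g h n `` {x}. po_rel A g h m `` {?M y})"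
      using po_refl by blast
  qed
  then show ?thesis by (simp add: pushout_def)
qed

lemma copair_cls:
  assumes compat: "\<And>a. a \<in> psh_obj A n \<Longrightarrow> uB n (g n a) = uC n (h n a)"
  shows "po_copair uB uC n (po_rel A g h n `` {x}) = case_sum (uB n) (uC n) x"
proof -
  have "case_sum (uB n) (uC n) ` (po_rel A g h n `` {x}) = {case_sum (uB n) (uC n) x}"
    using po_rel_val[of A n uB g uC h] compat po_refl by force
  then show ?thesis by (simp add: po_copair_def)
qed

lemma po_cls_mem: "x \<in> psh_obj B n <+> psh_obj C n \<Longrightarrow>
  po_rel A g h n `` {x} \<in> psh_obj (pushout A B C g h) n"
  by (simp add: po_obj quotientI)

lemma po_obj_cases:
  assumes "c \<in> psh_obj (pushout A B C g h) n"
  obtains x where "x \<in> psh_obj B n <+> psh_obj C n" "c = po_rel A g h n `` {x}"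
  using assms by (auto simp: po_obj quotient_def)

definition lifts2 where
  "lifts2 A B C g h D jB jC Y X f \<longleftrightarrow>
    (\<forall>uB uC v. is_nat B Y uB \<and> is_nat C Y uC \<and>
       (\<forall>n a. a \<in> psh_obj A n \<longrightarrow> uB n (g n a) = uC n (h n a)) \<and> is_nat D X v \<and>
       (\<forall>n b. b \<in> psh_obj B n \<longrightarrow> f n (uB n b) = v n (jB n b)) \<and>
       (\<forall>n c. c \<in> psh_obj C n \<longrightarrow> f n (uC n c) = v n (jC n c)) \<longrightarrow>
     (\<exists>k. is_nat D Y k \<and> (\<forall>n b. b \<in> psh_obj B n \<longrightarrow> k n (jB n b) = uB n b) \<and>
          (\<forall>n c. c \<in> psh_obj C n \<longrightarrow> k n (jC n c) = uC n c) \<and>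
          (\<forall>n d. d \<in> psh_obj D n \<longrightarrow> f n (k n d) = v n d)))"

lemma lifts_po:
  assumes A: "is_psh A" and g: "is_nat A B g" and h: "is_nat A C h"
    and jc: "\<And>n a. a \<in> psh_obj A n \<Longrightarrow> jB n (g n a) = jC n (h n a)"
  shows "lifts (pushout A B C g h) D (po_copair jB jC) Y X f \<longleftrightarrow> lifts2 A B C g h D jB jC Y X f"
proof
  let ?P = "pushout A B C g h"
  let ?R = "po_rel A g h"
  have jcl: "po_copair jB jC n (?R n `` {x}) = case_sum (jB n) (jC n) x" for n x
    using copair_cls[of A n jB g jC h] jc by blast
  assume L: "lifts ?P D (po_copair jB jC) Y X f"
  show "lifts2 A B C g h D jB jC Y X f"
    unfolding lifts2_def
  proof (intro allI impI)
    fix uB uC v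
    assume H: "is_nat B Y uB \<and> is_nat C Y uC \<and>
       (\<forall>n a. a \<in> psh_obj A n \<longrightarrow> uB n (g n a) = uC n (h n a)) \<and> is_nat D X v \<and>
       (\<forall>n b. b \<in> psh_obj B n \<longrightarrow> f n (uB n b) = v n (jB n b)) \<and>
       (\<forall>n c. c \<in> psh_obj C n \<longrightarrow> f n (uC n c) = v n (jC n c))"
    define u where "u = po_copair uB uC"
    have ucl: "u n (?R n `` {x}) = case_sum (uB n) (uC n) x" for n x
      unfolding u_def using copair_cls[of A n uB g uC h] H by blast
    have unat: "is_nat ?P Y u"
      unfolding is_nat_def
    proof (intro conjI allI impI)
      fix n c assume "c \<in> psh_obj ?P n"
      then obtain x where x: "x \<in> psh_obj B n <+> psh_obj C n" "c = ?R n `` {x}" by (rule po_obj_cases)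
      then show "u n c \<in> psh_obj Y n" using H ucl by (auto simp: is_nat_def)
    next
      fix m n \<phi> c assume phi: "\<phi> \<in> hom m n" and c: "c \<in> psh_obj ?P n"
      obtain x where x: "x \<in> psh_obj B n <+> psh_obj C n" "c = ?R n `` {x}" using c by (rule po_obj_cases)
      show "u m (psh_act ?P m n \<phi> c) = psh_act Y m n \<phi> (u n c)"
        unfolding x(2) po_act_cls[OF A g h phi] ucl
        using x(1) H phi by (auto simp: is_nat_def)
    qed
    have comm: "\<forall>n c. c \<in> psh_obj ?P n \<longrightarrow> f n (u n c) = v n (po_copair jB jC n c)"
    proof (intro allI impI)
      fix n c assume "c \<in> psh_obj ?P n"
      then obtain x where x: "x \<in> psh_obj B n <+> psh_obj C n" "c = ?R n `` {x}" by (rule po_obj_cases)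
      then show "f n (u n c) = v n (po_copair jB jC n c)"
        unfolding x(2) ucl jcl using H by auto
    qed
    obtain k where k: "is_nat D Y k" "\<forall>n c. c \<in> psh_obj ?P n \<longrightarrow> k n (po_copair jB jC n c) = u n c"
      "\<forall>n d. d \<in> psh_obj D n \<longrightarrow> f n (k n d) = v n d"
    proof -
      have "is_nat D X v" using H by blast
      then show ?thesis using L unat comm that unfolding lifts_def by blast
    qed
    show "\<exists>k. is_nat D Y k \<and> (\<forall>n b. b \<in> psh_obj B n \<longrightarrow> k n (jB n b) = uB n b) \<and>
          (\<forall>n c. c \<in> psh_obj C n \<longrightarrow> k n (jC n c) = uC n c) \<and>
          (\<forall>n d. d \<in> psh_obj D n \<longrightarrow> f n (k n d) = v n d)"
    proof (intro exI conjI allI impI)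
      show "is_nat D Y k" by (rule k(1))
    next
      fix n b assume b: "b \<in> psh_obj B n"
      have "Inl b \<in> psh_obj B n <+> psh_obj C n" using b by blast
      then have "?R n `` {Inl b} \<in> psh_obj ?P n" by (rule po_cls_mem)
      then show "k n (jB n b) = uB n b" using k(2) jcl ucl by (metis sum.simps(5))
    next
      fix n c assume c: "c \<in> psh_obj C n"
      have "Inr c \<in> psh_obj B n <+> psh_obj C n" using c by blast
      then have "?R n `` {Inr c} \<in> psh_obj ?P n" by (rule po_cls_mem)
      then show "k n (jC n c) = uC n c" using k(2) jcl ucl by (metis sum.simps(6))
    next
      fix n d assume "d \<in> psh_obj D n" then show "f n (k n d) = v n d" using k(3) by blast
    qed
  qed
next
  let ?P = "pushout A B C g h"
  let ?R = "po_rel A g h"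
  have jcl: "po_copair jB jC n (?R n `` {x}) = case_sum (jB n) (jC n) x" for n x
    using copair_cls[of A n jB g jC h] jc by blast
  assume L: "lifts2 A B C g h D jB jC Y X f"
  show "lifts ?P D (po_copair jB jC) Y X f"
    unfolding lifts_def
  proof (intro allI impI)
    fix u v assume H: "is_nat ?P Y u \<and> is_nat D X v \<and>
        (\<forall>n a. a \<in> psh_obj ?P n \<longrightarrow> f n (u n a) = v n (po_copair jB jC n a))"
    define uB where "uB n b = u n (?R n `` {Inl b})" for n b
    define uC where "uC n c = u n (?R n `` {Inr c})" for n c
    have memB: "b \<in> psh_obj B n \<Longrightarrow> ?R n `` {Inl b} \<in> psh_obj ?P n" for n b
      by (rule po_cls_mem) auto
    have memC: "c \<in> psh_obj C n \<Longrightarrow> ?R n `` {Inr c} \<in> psh_obj ?P n" for n c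
      by (rule po_cls_mem) auto
    have uBn: "is_nat B Y uB"
      unfolding is_nat_def
    proof (intro conjI allI impI)
      fix n b assume "b \<in> psh_obj B n" then show "uB n b \<in> psh_obj Y n"
        using memB H unfolding uB_def is_nat_def by blast
    next
      fix m n \<phi> b assume phi: "\<phi> \<in> hom m n" and b: "b \<in> psh_obj B n"
      have "uB m (psh_act B m n \<phi> b) = u m (psh_act ?P m n \<phi> (?R n `` {Inl b}))"
        unfolding uB_def po_act_cls[OF A g h phi] by simp
      also have "\<dots> = psh_act Y m n \<phi> (uB n b)"
        unfolding uB_def using H memB[OF b] phi unfolding is_nat_def by blast
      finally show "uB m (psh_act B m n \<phi> b) = psh_act Y m n \<phi> (uB n b)" .
    qed
    have uCn: "is_nat C Y uC"
      unfolding is_nat_def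
    proof (intro conjI allI impI)
      fix n c assume "c \<in> psh_obj C n" then show "uC n c \<in> psh_obj Y n"
        using memC H unfolding uC_def is_nat_def by blast
    next
      fix m n \<phi> c assume phi: "\<phi> \<in> hom m n" and c: "c \<in> psh_obj C n"
      have "uC m (psh_act C m n \<phi> c) = u m (psh_act ?P m n \<phi> (?R n `` {Inr c}))"
        unfolding uC_def po_act_cls[OF A g h phi] by simp
      also have "\<dots> = psh_act Y m n \<phi> (uC n c)"
        unfolding uC_def using H memC[OF c] phi unfolding is_nat_def by blast
      finally show "uC m (psh_act C m n \<phi> c) = psh_act Y m n \<phi> (uC n c)" .
    qed
    have compat: "\<forall>n a. a \<in> psh_obj A n \<longrightarrow> uB n (g n a) = uC n (h n a)"
    proof (intro allI impI)
      fix n a assume "a \<in> psh_obj A n"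
      then have "(Inl (g n a), Inr (h n a)) \<in> ?R n" by (rule po_gen)
      then have "?R n `` {Inl (g n a)} = ?R n `` {Inr (h n a)}"
        using po_equiv equiv_class_eq by metis
      then show "uB n (g n a) = uC n (h n a)" by (simp add: uB_def uC_def)
    qed
    have fB: "\<forall>n b. b \<in> psh_obj B n \<longrightarrow> f n (uB n b) = v n (jB n b)"
      using H memB jcl unfolding uB_def by (metis sum.simps(5))
    have fC: "\<forall>n c. c \<in> psh_obj C n \<longrightarrow> f n (uC n c) = v n (jC n c)"
      using H memC jcl unfolding uC_def by (metis sum.simps(6))
    obtain k where k: "is_nat D Y k" "\<forall>n b. b \<in> psh_obj B n \<longrightarrow> k n (jB n b) = uB n b"
          "\<forall>n c. c \<in> psh_obj C n \<longrightarrow> k n (jC n c) = uC n c"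
          "\<forall>n d. d \<in> psh_obj D n \<longrightarrow> f n (k n d) = v n d"
    proof -
      have "is_nat D X v" using H by blast
      then show ?thesis using L uBn uCn compat fB fC that unfolding lifts2_def by blast
    qed
    show "\<exists>k. is_nat D Y k \<and>
             (\<forall>n a. a \<in> psh_obj ?P n \<longrightarrow> k n (po_copair jB jC n a) = u n a) \<and>
             (\<forall>n b. b \<in> psh_obj D n \<longrightarrow> f n (k n b) = v n b)"
    proof (intro exI conjI allI impI)
      show "is_nat D Y k" by (rule k(1))
    next
      fix n c assume "c \<in> psh_obj ?P n"
      then obtain x where x: "x \<in> psh_obj B n <+> psh_obj C n" "c = ?R n `` {x}" by (rule po_obj_cases)
      show "k n (po_copair jB jC n c) = u n c"
        unfolding x(2) jcl using x(1) k(2,3) by (auto simp: uB_def uC_def)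
    next
      fix n d assume "d \<in> psh_obj D n" then show "f n (k n d) = v n d" using k(4) by blast
    qed
  qed
qed

lemma nat_g1: "is_nat A B m \<Longrightarrow>
  is_nat (prod_psh one_psh A) (prod_psh one_psh B) (\<lambda>n (x, x'). (x, m n x'))"
  unfolding is_nat_def by auto

lemma nat_h1: "is_nat (prod_psh one_psh A) (prod_psh Ipsh A) (\<lambda>n (x, x'). (delta k n x, x'))"
proof -
  have "delta k n u \<in> hom n (Suc 0)" for n u using delta_hom by simp
  moreover have "\<phi> \<in> hom m n \<Longrightarrow> delta k m u = compose (Cube m) (delta k n u) \<phi>" for \<phi> m n u
    using delta_nat by metis
  ultimately show ?thesis unfolding is_nat_def by auto
qed

lemma nat_Mr: "is_nat B Ipsh r \<Longrightarrow> is_nat A B m \<Longrightarrow>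
  is_nat A (prod_psh Ipsh A) (\<lambda>n a. (r n (m n a), a))"
  unfolding is_nat_def by auto

lemma lifts_Mr:
  assumes "is_psh A" "is_nat B Ipsh r" "is_nat A B m"
  shows "lifts (Mr A B r m) (prod_psh Ipsh B) (rB_map r m) Y X f \<longleftrightarrow>
    lifts2 A B (prod_psh Ipsh A) m (\<lambda>n a. (r n (m n a), a)) (prod_psh Ipsh B)
      (\<lambda>n b. (r n b, b)) (\<lambda>n (i, a). (i, m n a)) Y X f"
  unfolding Mr_def rB_map_def
  by (rule lifts_po) (use assms nat_Mr in auto)

lemma lifts_pp:
  assumes "is_psh A" "is_nat A B m"
  shows "lifts (pp_dom one_psh Ipsh (delta k) A B m) (prod_psh Ipsh B) (pp_map (delta k) m) Y X f \<longleftrightarrow>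
    lifts2 (prod_psh one_psh A) (prod_psh one_psh B) (prod_psh Ipsh A)
      (\<lambda>n (x, x'). (x, m n x')) (\<lambda>n (x, x'). (delta k n x, x')) (prod_psh Ipsh B)
      (\<lambda>n (x, y'). (delta k n x, y')) (\<lambda>n (y, x'). (y, m n x')) Y X f"
  unfolding pp_dom_def pp_map_def
  by (rule lifts_po) (use assms nat_g1 nat_h1 is_psh_prod is_psh_one in auto)

lemma delta_hom': "delta k n u \<in> hom n (Suc 0)" using delta_hom by simp
lemma delta_nat': "\<phi> \<in> hom m n \<Longrightarrow> compose (Cube m) (delta k n u) \<phi> = delta k m u'"
  using delta_nat by metis

lemma unb_to_b:
  fixes Y X A B :: "'a psh" and f :: "nat \<Rightarrow> 'a \<Rightarrow> 'a" and m :: "nat \<Rightarrow> 'a \<Rightarrow> 'a"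
  assumes U: "unbiased_fibration Y X f" and A: "is_psh A" and B: "is_psh B" and m: "is_mono A B m"
  shows "lifts (pp_dom one_psh Ipsh (delta k) A B m) (prod_psh Ipsh B) (pp_map (delta k) m) Y X f"
proof -
  have mn: "is_nat A B m" using m by (simp add: is_mono_def)
  define r where "r n b = delta k n ()" for n and b :: 'a
  have rn: "is_nat B Ipsh r" unfolding is_nat_def r_def using delta_hom' delta_nat' by auto
  have L: "lifts2 A B (prod_psh Ipsh A) m (\<lambda>n a. (r n (m n a), a)) (prod_psh Ipsh B)
      (\<lambda>n b. (r n b, b)) (\<lambda>n (i, a). (i, m n a)) Y X f"
    using U A B rn m lifts_Mr[OF A rn mn] unfolding unbiased_fibration_def by blast
  show ?thesis unfolding lifts_pp[OF A mn] lifts2_def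
  proof (intro allI impI)
    fix uB' uC v
    assume H: "is_nat (prod_psh one_psh B) Y uB' \<and> is_nat (prod_psh Ipsh A) Y uC \<and>
       (\<forall>n a. a \<in> psh_obj (prod_psh one_psh A) n \<longrightarrow>
          uB' n ((\<lambda>n (x, x'). (x, m n x')) n a) = uC n ((\<lambda>n (x, x'). (delta k n x, x')) n a)) \<and>
       is_nat (prod_psh Ipsh B) X v \<and>
       (\<forall>n b. b \<in> psh_obj (prod_psh one_psh B) n \<longrightarrow>
          f n (uB' n b) = v n ((\<lambda>n (x, y'). (delta k n x, y')) n b)) \<and>
       (\<forall>n c. c \<in> psh_obj (prod_psh Ipsh A) n \<longrightarrow> f n (uC n c) = v n ((\<lambda>n (y, x'). (y, m n x')) n c))"
    define uB where "uB n b = uB' n ((), b)" for n b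
    have uBn: "is_nat B Y uB" using H unfolding is_nat_def uB_def by auto
    have c1: "\<forall>n a. a \<in> psh_obj A n \<longrightarrow> uB n (m n a) = uC n (r n (m n a), a)"
      using H unfolding uB_def r_def by auto
    have c2: "\<forall>n b. b \<in> psh_obj B n \<longrightarrow> f n (uB n b) = v n (r n b, b)"
      using H unfolding uB_def r_def by auto
    have c3: "\<forall>n c. c \<in> psh_obj (prod_psh Ipsh A) n \<longrightarrow> f n (uC n c) = v n ((\<lambda>n (i, a). (i, m n a)) n c)"
      using H by blast
    obtain k0 where k0: "is_nat (prod_psh Ipsh B) Y k0"
      "\<forall>n b. b \<in> psh_obj B n \<longrightarrow> k0 n (r n b, b) = uB n b"
      "\<forall>n c. c \<in> psh_obj (prod_psh Ipsh A) n \<longrightarrow> k0 n ((\<lambda>n (i, a). (i, m n a)) n c) = uC n c"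
      "\<forall>n d. d \<in> psh_obj (prod_psh Ipsh B) n \<longrightarrow> f n (k0 n d) = v n d"
    proof -
      have vn: "is_nat (prod_psh Ipsh B) X v" "is_nat (prod_psh Ipsh A) Y uC" using H by blast+
      show ?thesis
        by (rule L[unfolded lifts2_def, rule_format, of uB uC v, THEN exE])
           (use that uBn vn c1 c2 c3 in blast)+
    qed
    show "\<exists>kk. is_nat (prod_psh Ipsh B) Y kk \<and>
          (\<forall>n b. b \<in> psh_obj (prod_psh one_psh B) n \<longrightarrow> kk n ((\<lambda>n (x, y'). (delta k n x, y')) n b) = uB' n b) \<and>
          (\<forall>n c. c \<in> psh_obj (prod_psh Ipsh A) n \<longrightarrow> kk n ((\<lambda>n (y, x'). (y, m n x')) n c) = uC n c) \<and>
          (\<forall>n d. d \<in> psh_obj (prod_psh Ipsh B) n \<longrightarrow> f n (kk n d) = v n d)"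
      using k0 unfolding uB_def r_def by (intro exI[of _ k0]) auto
  qed
qed

lemma nat_act: "is_nat P Q u \<Longrightarrow> \<phi> \<in> hom m n \<Longrightarrow> x \<in> psh_obj P n \<Longrightarrow>
  u m (psh_act P m n \<phi> x) = psh_act Q m n \<phi> (u n x)"
  by (simp add: is_nat_def)
lemma nat_obj: "is_nat P Q u \<Longrightarrow> x \<in> psh_obj P n \<Longrightarrow> u n x \<in> psh_obj Q n"
  by (simp add: is_nat_def)
lemma psh_act_obj: "is_psh P \<Longrightarrow> \<phi> \<in> hom m n \<Longrightarrow> x \<in> psh_obj P n \<Longrightarrow> psh_act P m n \<phi> x \<in> psh_obj P m"
  by (simp add: is_psh_def)
lemma psh_act_id: "is_psh P \<Longrightarrow> x \<in> psh_obj P n \<Longrightarrow> psh_act P n n (restrict id (Cube n)) x = x"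
  by (simp add: is_psh_def)
lemma psh_act_comp: "is_psh P \<Longrightarrow> \<phi> \<in> hom m n \<Longrightarrow> \<psi> \<in> hom k m \<Longrightarrow> x \<in> psh_obj P n \<Longrightarrow>
  psh_act P k m \<psi> (psh_act P m n \<phi> x) = psh_act P k n (compose (Cube k) \<phi> \<psi>) x"
  by (simp add: is_psh_def)

lemma jn_hom': "i \<in> hom n (Suc 0) \<Longrightarrow> j \<in> hom n (Suc 0) \<Longrightarrow> jn n i j \<in> hom n (Suc 0)"
  using jn_hom by simp
lemma jn_d0': "i \<in> hom n (Suc 0) \<Longrightarrow> jn n (delta 0 n u) i = i"
  using jn_d0 by simp
lemma jn_d1': "i \<in> hom n (Suc 0) \<Longrightarrow> jn n (delta 1 n u) i = delta 1 n u"
  using jn_d1 by simp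
lemma compose_hom': "\<phi> \<in> hom m n \<Longrightarrow> x \<in> hom n (Suc 0) \<Longrightarrow> compose (Cube m) x \<phi> \<in> hom m (Suc 0)"
  using compose_hom by blast

lemma step2:
  fixes Y X A B :: "'a psh" and f m :: "nat \<Rightarrow> 'a \<Rightarrow> 'a" and r :: "nat \<Rightarrow> 'a \<Rightarrow> nat set \<Rightarrow> nat set"
    and uI h1 :: "nat \<Rightarrow> (nat set \<Rightarrow> nat set) \<times> 'a \<Rightarrow> 'a" and uB :: "nat \<Rightarrow> 'a \<Rightarrow> 'a"
    and v :: "nat \<Rightarrow> (nat set \<Rightarrow> nat set) \<times> 'a \<Rightarrow> 'a"
  assumes inf: "infinite (UNIV :: 'a set)"
    and RL: "rlp_delta_pp Y X f" and A: "is_psh A" and B: "is_psh B"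
    and rn: "is_nat B Ipsh r" and mm: "is_mono A B m"
    and uIn: "is_nat (prod_psh Ipsh A) Y uI" and vn: "is_nat (prod_psh Ipsh B) X v"
    and fI: "\<And>n i a. i \<in> hom n (Suc 0) \<Longrightarrow> a \<in> psh_obj A n \<Longrightarrow> f n (uI n (i, a)) = v n (i, m n a)"
    and h1n: "is_nat (prod_psh Ipsh B) Y h1"
    and h1a: "\<And>n b. b \<in> psh_obj B n \<Longrightarrow> h1 n (delta 0 n (), b) = uB n b"
    and h1b: "\<And>n i a. i \<in> hom n (Suc 0) \<Longrightarrow> a \<in> psh_obj A n \<Longrightarrow>
      h1 n (i, m n a) = uI n (jn n i (r n (m n a)), a)"
    and h1c: "\<And>n i b. i \<in> hom n (Suc 0) \<Longrightarrow> b \<in> psh_obj B n \<Longrightarrow>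
      f n (h1 n (i, b)) = v n (jn n i (r n b), b)"
  shows "\<exists>k. is_nat (prod_psh Ipsh B) Y k \<and> (\<forall>n b. b \<in> psh_obj B n \<longrightarrow> k n (r n b, b) = uB n b) \<and>
          (\<forall>n c. c \<in> psh_obj (prod_psh Ipsh A) n \<longrightarrow> k n ((\<lambda>n (i, a). (i, m n a)) n c) = uI n c) \<and>
          (\<forall>n d. d \<in> psh_obj (prod_psh Ipsh B) n \<longrightarrow> f n (k n d) = v n d)"
proof -
  have mn: "is_nat A B m" and minj: "\<And>n. inj_on (m n) (psh_obj A n)" using mm by (auto simp: is_mono_def)
  have mA: "\<And>n a. a \<in> psh_obj A n \<Longrightarrow> m n a \<in> psh_obj B n" using mn by (rule nat_obj)
  have rB: "\<And>n b. b \<in> psh_obj B n \<Longrightarrow> r n b \<in> hom n (Suc 0)" using rn nat_obj by fastforce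
  have ract: "\<And>m' n \<phi> b. \<phi> \<in> hom m' n \<Longrightarrow> b \<in> psh_obj B n \<Longrightarrow>
     r m' (psh_act B m' n \<phi> b) = compose (Cube m') (r n b) \<phi>"
    using rn nat_act by fastforce
  have mact: "\<And>m' n \<phi> a. \<phi> \<in> hom m' n \<Longrightarrow> a \<in> psh_obj A n \<Longrightarrow>
     m m' (psh_act A m' n \<phi> a) = psh_act B m' n \<phi> (m n a)"
    using mn nat_act by fastforce
  let ?IB = "prod_psh Ipsh B"
  have IBp: "is_psh ?IB" using is_psh_prod[OF is_psh_Ipsh B] .
  have "\<forall>n. \<exists>e :: (nat set \<Rightarrow> nat set) \<times> 'a \<Rightarrow> 'a. inj_on e (hom n (Suc 0) \<times> UNIV)"
    using enc_exists[OF inf hom_finite] by blast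
  then obtain E :: "nat \<Rightarrow> (nat set \<Rightarrow> nat set) \<times> 'a \<Rightarrow> 'a"
    where E0: "\<And>n. inj_on (E n) (hom n (Suc 0) \<times> UNIV)" by metis
  have Einj: "inj_on (E n) (psh_obj ?IB n)" for n
    by (rule inj_on_subset[OF E0]) auto
  define d where "d n x = the_inv_into (psh_obj ?IB n) (E n) x" for n x
  have dE: "\<And>n p. p \<in> psh_obj ?IB n \<Longrightarrow> d n (E n p) = p"
    unfolding d_def using Einj the_inv_into_f_f by fast
  define B2 :: "'a psh" where
    "B2 = \<lparr>psh_obj = (\<lambda>n. E n ` psh_obj ?IB n), psh_act = (\<lambda>m n \<phi> x. E m (psh_act ?IB m n \<phi> (d n x)))\<rparr>"
  have objB2: "psh_obj B2 n = E n ` psh_obj ?IB n" for n by (simp add: B2_def)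
  have actB2: "\<And>m' n \<phi> p. p \<in> psh_obj ?IB n \<Longrightarrow> psh_act B2 m' n \<phi> (E n p) = E m' (psh_act ?IB m' n \<phi> p)"
    by (simp add: B2_def dE)
  have B2p: "is_psh B2"
    unfolding is_psh_def
  proof (intro conjI allI impI)
    fix m' n \<phi> x assume phi: "\<phi> \<in> hom m' n" and x: "x \<in> psh_obj B2 n"
    then obtain p where p: "p \<in> psh_obj ?IB n" "x = E n p" by (auto simp: objB2)
    show "psh_act B2 m' n \<phi> x \<in> psh_obj B2 m'"
      unfolding p(2) actB2[OF p(1)] objB2 using psh_act_obj[OF IBp phi p(1)] by blast
  next
    fix n x assume x: "x \<in> psh_obj B2 n"
    then obtain p where p: "p \<in> psh_obj ?IB n" "x = E n p" by (auto simp: objB2)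
    show "psh_act B2 n n (restrict id (Cube n)) x = x"
      unfolding p(2) actB2[OF p(1)] using psh_act_id[OF IBp p(1)] by simp
  next
    fix k m' n \<phi> \<psi> x assume phi: "\<phi> \<in> hom m' n" and psi: "\<psi> \<in> hom k m'" and x: "x \<in> psh_obj B2 n"
    then obtain p where p: "p \<in> psh_obj ?IB n" "x = E n p" by (auto simp: objB2)
    show "psh_act B2 k m' \<psi> (psh_act B2 m' n \<phi> x) = psh_act B2 k n (compose (Cube k) \<phi> \<psi>) x"
      unfolding p(2) actB2[OF p(1)] actB2[OF psh_act_obj[OF IBp phi p(1)]]
      using psh_act_comp[OF IBp phi psi p(1)] by simp
  qed
  define MS where "MS n = {p \<in> psh_obj ?IB n. fst p = r n (snd p) \<or> snd p \<in> m n ` psh_obj A n}" for n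
  have MSsub: "MS n \<subseteq> psh_obj ?IB n" for n by (auto simp: MS_def)
  have MSact: "\<And>m' n \<phi> p. \<phi> \<in> hom m' n \<Longrightarrow> p \<in> MS n \<Longrightarrow> psh_act ?IB m' n \<phi> p \<in> MS m'"
  proof -
    fix m' n \<phi> p assume phi: "\<phi> \<in> hom m' n" and p: "p \<in> MS n"
    obtain i b where ib: "p = (i, b)" "i \<in> hom n (Suc 0)" "b \<in> psh_obj B n"
      "i = r n b \<or> b \<in> m n ` psh_obj A n" using p by (auto simp: MS_def)
    have mem: "psh_act ?IB m' n \<phi> p \<in> psh_obj ?IB m'" using psh_act_obj[OF IBp phi] p MSsub by blast
    from ib(4) show "psh_act ?IB m' n \<phi> p \<in> MS m'"
    proof
      assume "i = r n b"
      then show ?thesis using mem ract[OF phi ib(3)] unfolding MS_def ib(1) by simp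
    next
      assume "b \<in> m n ` psh_obj A n"
      then obtain a where a: "a \<in> psh_obj A n" "b = m n a" by blast
      have "psh_act B m' n \<phi> b \<in> m m' ` psh_obj A m'"
        using mact[OF phi a(1)] psh_act_obj[OF A phi a(1)] a(2) by (metis image_eqI)
      then show ?thesis using mem unfolding MS_def ib(1) by simp
    qed
  qed
  define A2 :: "'a psh" where "A2 = \<lparr>psh_obj = (\<lambda>n. E n ` MS n), psh_act = psh_act B2\<rparr>"
  have objA2: "psh_obj A2 n = E n ` MS n" for n by (simp add: A2_def)
  have actA2: "psh_act A2 = psh_act B2" by (simp add: A2_def)
  have A2sub: "psh_obj A2 n \<subseteq> psh_obj B2 n" for n using MSsub by (auto simp: objA2 objB2)
  have A2p: "is_psh A2"
    unfolding is_psh_def actA2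
  proof (intro conjI allI impI)
    fix m' n \<phi> x assume phi: "\<phi> \<in> hom m' n" and x: "x \<in> psh_obj A2 n"
    then obtain p where p: "p \<in> MS n" "x = E n p" by (auto simp: objA2)
    show "psh_act B2 m' n \<phi> x \<in> psh_obj A2 m'"
      unfolding p(2) actB2[OF MSsub[THEN subsetD, OF p(1)]] objA2 using MSact[OF phi p(1)] by blast
  next
    fix n x assume x: "x \<in> psh_obj A2 n"
    then show "psh_act B2 n n (restrict id (Cube n)) x = x" using A2sub psh_act_id[OF B2p] by blast
  next
    fix k m' n \<phi> \<psi> x assume phi: "\<phi> \<in> hom m' n" and psi: "\<psi> \<in> hom k m'" and x: "x \<in> psh_obj A2 n"
    then show "psh_act B2 k m' \<psi> (psh_act B2 m' n \<phi> x) = psh_act B2 k n (compose (Cube k) \<phi> \<psi>) x"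
      using A2sub psh_act_comp[OF B2p phi psi] by blast
  qed
  have m2: "is_mono A2 B2 (\<lambda>n x. x)"
    unfolding is_mono_def is_nat_def using A2sub by (auto simp: actA2)
  have m2n: "is_nat A2 B2 (\<lambda>n x. x)" using m2 by (simp add: is_mono_def)
  have L2: "lifts2 (prod_psh one_psh A2) (prod_psh one_psh B2) (prod_psh Ipsh A2)
      (\<lambda>n (x, x'). (x, x')) (\<lambda>n (x, x'). (delta 1 n x, x')) (prod_psh Ipsh B2)
      (\<lambda>n (x, y'). (delta 1 n x, y')) (\<lambda>n (y, x'). (y, x')) Y X f"
    using RL A2p B2p m2 lifts_pp[OF A2p m2n, of 1] unfolding rlp_delta_pp_def by blast
  have B2E: "\<And>n y. y \<in> psh_obj B2 n \<Longrightarrow> \<exists>i b. y = E n (i, b) \<and> i \<in> hom n (Suc 0) \<and> b \<in> psh_obj B n"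
    by (auto simp: objB2)
  have A2E: "\<And>n y. y \<in> psh_obj A2 n \<Longrightarrow> \<exists>i b. y = E n (i, b) \<and> (i, b) \<in> MS n"
    by (auto simp: objA2)
  have MSI: "\<And>n i b. (i, b) \<in> MS n \<Longrightarrow> i \<in> hom n (Suc 0) \<and> b \<in> psh_obj B n"
    by (auto simp: MS_def)
  have dact: "\<And>m' n \<phi> i b. i \<in> hom n (Suc 0) \<Longrightarrow> b \<in> psh_obj B n \<Longrightarrow>
      psh_act B2 m' n \<phi> (E n (i, b)) = E m' (compose (Cube m') i \<phi>, psh_act B m' n \<phi> b)"
    using actB2 by simp
  define uB2 where "uB2 n p = h1 n (delta 1 n (), snd (d n (snd p)))" for n and p :: "unit \<times> 'a"
  define uC2 where "uC2 n p = (case d n (snd p) of (i, b) \<Rightarrow> if i = r n b then h1 n (fst p, b)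
      else uI n (jn n (fst p) i, THE a. a \<in> psh_obj A n \<and> m n a = b))" for n p
  define V2 where "V2 n p = (case d n (snd p) of (i, b) \<Rightarrow> v n (jn n (fst p) i, b))" for n p
  have dE': "\<And>n i b. i \<in> hom n (Suc 0) \<Longrightarrow> b \<in> psh_obj B n \<Longrightarrow> d n (E n (i, b)) = (i, b)"
    using dE by simp
  have C1: "\<And>n z i b. (i, b) \<in> MS n \<Longrightarrow> i = r n b \<Longrightarrow> uC2 n (z, E n (i, b)) = h1 n (z, b)"
    using MSI dE' by (simp add: uC2_def)
  have C2: "\<And>n z i b a. (i, b) \<in> MS n \<Longrightarrow> z \<in> hom n (Suc 0) \<Longrightarrow> a \<in> psh_obj A n \<Longrightarrow> b = m n a \<Longrightarrow>
      uC2 n (z, E n (i, b)) = uI n (jn n z i, a)"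
  proof -
    fix n z i b a assume ib: "(i, b) \<in> MS n" and z: "z \<in> hom n (Suc 0)" and a: "a \<in> psh_obj A n"
      and b: "b = m n a"
    show "uC2 n (z, E n (i, b)) = uI n (jn n z i, a)"
    proof (cases "i = r n b")
      case True
      then show ?thesis using C1[OF ib True] h1b[OF z a] b by simp
    next
      case False
      have "(THE a'. a' \<in> psh_obj A n \<and> m n a' = b) = a"
        using a b minj[of n] by (auto simp: inj_on_def)
      then show ?thesis using False MSI[OF ib] dE' by (simp add: uC2_def)
    qed
  qed
  have uB2n: "is_nat (prod_psh one_psh B2) Y uB2"
    unfolding is_nat_def
  proof (intro conjI allI impI)
    fix n p assume p: "p \<in> psh_obj (prod_psh one_psh B2) n"
    then obtain i b where ib: "p = ((), E n (i, b))" "i \<in> hom n (Suc 0)" "b \<in> psh_obj B n"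
      using B2E by fastforce
    show "uB2 n p \<in> psh_obj Y n"
      unfolding uB2_def ib(1) using dE'[OF ib(2,3)] nat_obj[OF h1n] delta_hom' ib by simp
  next
    fix m' n \<phi> p assume phi: "\<phi> \<in> hom m' n" and p: "p \<in> psh_obj (prod_psh one_psh B2) n"
    then obtain i b where ib: "p = ((), E n (i, b))" "i \<in> hom n (Suc 0)" "b \<in> psh_obj B n"
      using B2E by fastforce
    have mem: "(delta 1 n (), b) \<in> psh_obj ?IB n" using ib delta_hom' by simp
    have b': "psh_act B m' n \<phi> b \<in> psh_obj B m'" using psh_act_obj[OF B phi ib(3)] .
    have i': "compose (Cube m') i \<phi> \<in> hom m' (Suc 0)" using compose_hom'[OF phi ib(2)] .
    show "uB2 m' (psh_act (prod_psh one_psh B2) m' n \<phi> p) = psh_act Y m' n \<phi> (uB2 n p)"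
      unfolding ib(1) uB2_def using dact[OF ib(2,3)] dE'[OF ib(2,3)] dE'[OF i' b']
        nat_act[OF h1n phi mem] delta_nat'[OF phi] by simp
  qed
  have uC2n: "is_nat (prod_psh Ipsh A2) Y uC2"
    unfolding is_nat_def
  proof (intro conjI allI impI)
    fix n p assume p: "p \<in> psh_obj (prod_psh Ipsh A2) n"
    then obtain z i b where ib: "p = (z, E n (i, b))" "z \<in> hom n (Suc 0)" "(i, b) \<in> MS n"
      using A2E by fastforce
    have ib': "i \<in> hom n (Suc 0)" "b \<in> psh_obj B n" using MSI[OF ib(3)] by auto
    show "uC2 n p \<in> psh_obj Y n"
    proof (cases "i = r n b")
      case True then show ?thesis unfolding ib(1) C1[OF ib(3) True]
        using nat_obj[OF h1n] ib ib' by simp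
    next
      case False
      then obtain a where a: "a \<in> psh_obj A n" "b = m n a" using ib(3) by (auto simp: MS_def)
      show ?thesis unfolding ib(1) C2[OF ib(3) ib(2) a]
        using nat_obj[OF uIn] jn_hom'[OF ib(2) ib'(1)] a by simp
    qed
  next
    fix m' n \<phi> p assume phi: "\<phi> \<in> hom m' n" and p: "p \<in> psh_obj (prod_psh Ipsh A2) n"
    then obtain z i b where ib: "p = (z, E n (i, b))" "z \<in> hom n (Suc 0)" "(i, b) \<in> MS n"
      using A2E by fastforce
    have ib': "i \<in> hom n (Suc 0)" "b \<in> psh_obj B n" using MSI[OF ib(3)] by auto
    have ms': "(compose (Cube m') i \<phi>, psh_act B m' n \<phi> b) \<in> MS m'"
      using MSact[OF phi ib(3)] by simp
    have z': "compose (Cube m') z \<phi> \<in> hom m' (Suc 0)" using compose_hom'[OF phi ib(2)] .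
    have act: "psh_act (prod_psh Ipsh A2) m' n \<phi> p =
        (compose (Cube m') z \<phi>, E m' (compose (Cube m') i \<phi>, psh_act B m' n \<phi> b))"
      unfolding ib(1) using dact[OF ib'] by (simp add: actA2)
    show "uC2 m' (psh_act (prod_psh Ipsh A2) m' n \<phi> p) = psh_act Y m' n \<phi> (uC2 n p)"
    proof (cases "i = r n b")
      case True
      have eq: "compose (Cube m') i \<phi> = r m' (psh_act B m' n \<phi> b)" using True ract[OF phi ib'(2)] by simp
      have mem: "(z, b) \<in> psh_obj ?IB n" using ib ib' by simp
      have "uC2 m' (psh_act (prod_psh Ipsh A2) m' n \<phi> p) = h1 m' (compose (Cube m') z \<phi>, psh_act B m' n \<phi> b)"
        using act C1[OF ms' eq] by simp
      also have "\<dots> = psh_act Y m' n \<phi> (uC2 n p)"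
        using ib(1) C1[OF ib(3) True] nat_act[OF h1n phi mem] by simp
      finally show ?thesis .
    next
      case False
      then obtain a where a: "a \<in> psh_obj A n" "b = m n a" using ib(3) by (auto simp: MS_def)
      have a': "psh_act A m' n \<phi> a \<in> psh_obj A m'" using psh_act_obj[OF A phi a(1)] .
      have b': "psh_act B m' n \<phi> b = m m' (psh_act A m' n \<phi> a)" using mact[OF phi a(1)] a(2) by simp
      have mem: "(jn n z i, a) \<in> psh_obj (prod_psh Ipsh A) n" using jn_hom'[OF ib(2) ib'(1)] a by simp
      have "uC2 m' (psh_act (prod_psh Ipsh A2) m' n \<phi> p) =
          uI m' (jn m' (compose (Cube m') z \<phi>) (compose (Cube m') i \<phi>), psh_act A m' n \<phi> a)"
        using act C2[OF ms' z' a' b'] by simp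
      also have "\<dots> = psh_act Y m' n \<phi> (uC2 n p)"
        using ib(1) C2[OF ib(3) ib(2) a] nat_act[OF uIn phi mem] phi by (simp add: jn_nat)
      finally show ?thesis .
    qed
  qed
  have V2n: "is_nat (prod_psh Ipsh B2) X V2"
    unfolding is_nat_def
  proof (intro conjI allI impI)
    fix n p assume p: "p \<in> psh_obj (prod_psh Ipsh B2) n"
    then obtain z i b where ib: "p = (z, E n (i, b))" "z \<in> hom n (Suc 0)" "i \<in> hom n (Suc 0)" "b \<in> psh_obj B n"
      using B2E by fastforce
    show "V2 n p \<in> psh_obj X n"
      unfolding ib(1) V2_def using dE'[OF ib(3,4)] nat_obj[OF vn] jn_hom'[OF ib(2,3)] ib(4) by simp
  next
    fix m' n \<phi> p assume phi: "\<phi> \<in> hom m' n" and p: "p \<in> psh_obj (prod_psh Ipsh B2) n"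
    then obtain z i b where ib: "p = (z, E n (i, b))" "z \<in> hom n (Suc 0)" "i \<in> hom n (Suc 0)" "b \<in> psh_obj B n"
      using B2E by fastforce
    have b': "psh_act B m' n \<phi> b \<in> psh_obj B m'" using psh_act_obj[OF B phi ib(4)] .
    have i': "compose (Cube m') i \<phi> \<in> hom m' (Suc 0)" using compose_hom'[OF phi ib(3)] .
    have mem: "(jn n z i, b) \<in> psh_obj ?IB n" using jn_hom'[OF ib(2,3)] ib(4) by simp
    show "V2 m' (psh_act (prod_psh Ipsh B2) m' n \<phi> p) = psh_act X m' n \<phi> (V2 n p)"
      unfolding ib(1) V2_def using dact[OF ib(3,4)] dE'[OF ib(3,4)] dE'[OF i' b']
        nat_act[OF vn phi mem] phi by (simp add: jn_nat)
  qed
  have d1: "delta 1 n () \<in> hom n (Suc 0)" and d0: "delta 0 n () \<in> hom n (Suc 0)" for n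
    using delta_hom' by auto
  have cmp2: "\<forall>n a. a \<in> psh_obj (prod_psh one_psh A2) n \<longrightarrow>
      uB2 n ((\<lambda>n (x, x'). (x, x')) n a) = uC2 n ((\<lambda>n (x, x'). (delta 1 n x, x')) n a)"
  proof (intro allI impI)
    fix n p assume p: "p \<in> psh_obj (prod_psh one_psh A2) n"
    then obtain i b where ib: "p = ((), E n (i, b))" "(i, b) \<in> MS n" using A2E by fastforce
    have ib': "i \<in> hom n (Suc 0)" "b \<in> psh_obj B n" using MSI[OF ib(2)] by auto
    have L: "uB2 n ((\<lambda>n (x, x'). (x, x')) n p) = h1 n (delta 1 n (), b)"
      unfolding ib(1) uB2_def using dE'[OF ib'] by simp
    show "uB2 n ((\<lambda>n (x, x'). (x, x')) n p) = uC2 n ((\<lambda>n (x, x'). (delta 1 n x, x')) n p)"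
    proof (cases "i = r n b")
      case True then show ?thesis unfolding L using C1[OF ib(2) True] ib(1) by simp
    next
      case False
      then obtain a where a: "a \<in> psh_obj A n" "b = m n a" using ib(2) by (auto simp: MS_def)
      show ?thesis unfolding L using C2[OF ib(2) d1 a] ib(1) h1b[OF d1 a(1)] a(2)
        jn_d1'[OF ib'(1)] jn_d1'[OF rB[OF mA[OF a(1)]]] by simp
    qed
  qed
  have fB2: "\<forall>n p. p \<in> psh_obj (prod_psh one_psh B2) n \<longrightarrow>
      f n (uB2 n p) = V2 n ((\<lambda>n (x, y'). (delta 1 n x, y')) n p)"
  proof (intro allI impI)
    fix n p assume p: "p \<in> psh_obj (prod_psh one_psh B2) n"
    then obtain i b where ib: "p = ((), E n (i, b))" "i \<in> hom n (Suc 0)" "b \<in> psh_obj B n"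
      using B2E by fastforce
    show "f n (uB2 n p) = V2 n ((\<lambda>n (x, y'). (delta 1 n x, y')) n p)"
      unfolding ib(1) uB2_def V2_def using dE'[OF ib(2,3)] h1c[OF d1 ib(3)] jn_d1'[OF ib(2)]
        jn_d1'[OF rB[OF ib(3)]] by simp
  qed
  have fC2: "\<forall>n p. p \<in> psh_obj (prod_psh Ipsh A2) n \<longrightarrow>
      f n (uC2 n p) = V2 n ((\<lambda>n (y, x'). (y, x')) n p)"
  proof (intro allI impI)
    fix n p assume p: "p \<in> psh_obj (prod_psh Ipsh A2) n"
    then obtain z i b where ib: "p = (z, E n (i, b))" "z \<in> hom n (Suc 0)" "(i, b) \<in> MS n"
      using A2E by fastforce
    have ib': "i \<in> hom n (Suc 0)" "b \<in> psh_obj B n" using MSI[OF ib(3)] by auto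
    have R: "V2 n ((\<lambda>n (y, x'). (y, x')) n p) = v n (jn n z i, b)"
      unfolding ib(1) V2_def using dE'[OF ib'] by simp
    show "f n (uC2 n p) = V2 n ((\<lambda>n (y, x'). (y, x')) n p)"
    proof (cases "i = r n b")
      case True then show ?thesis using R ib(1) C1[OF ib(3) True] h1c[OF ib(2) ib'(2)] by simp
    next
      case False
      then obtain a where a: "a \<in> psh_obj A n" "b = m n a" using ib(3) by (auto simp: MS_def)
      show ?thesis using R ib(1) C2[OF ib(3) ib(2) a] fI[OF jn_hom'[OF ib(2) ib'(1)] a(1)] a(2)
        by simp
    qed
  qed
  obtain H2 where H2n: "is_nat (prod_psh Ipsh B2) Y H2"
    and H2C: "\<forall>n c. c \<in> psh_obj (prod_psh Ipsh A2) n \<longrightarrow> H2 n ((\<lambda>n (y, x'). (y, x')) n c) = uC2 n c"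
    and H2f: "\<forall>n d. d \<in> psh_obj (prod_psh Ipsh B2) n \<longrightarrow> f n (H2 n d) = V2 n d"
    by (rule L2[unfolded lifts2_def, rule_format, of uB2 uC2 V2, THEN exE])
       (use uB2n uC2n V2n cmp2 fB2 fC2 in blast)+
  have H2C': "\<And>n z i b. z \<in> hom n (Suc 0) \<Longrightarrow> (i, b) \<in> MS n \<Longrightarrow> H2 n (z, E n (i, b)) = uC2 n (z, E n (i, b))"
    using H2C by (auto simp: objA2)
  define K where "K n p = H2 n (delta 0 n (), E n p)" for n p
  show ?thesis
  proof (intro exI[of _ K] conjI allI impI)
    show "is_nat ?IB Y K"
      unfolding is_nat_def
    proof (intro conjI allI impI)
      fix n p assume p: "p \<in> psh_obj ?IB n"
      then show "K n p \<in> psh_obj Y n" unfolding K_def using nat_obj[OF H2n] d0 objB2 by auto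
    next
      fix m' n \<phi> p assume phi: "\<phi> \<in> hom m' n" and p: "p \<in> psh_obj ?IB n"
      have mem: "(delta 0 n (), E n p) \<in> psh_obj (prod_psh Ipsh B2) n" using p d0 objB2 by auto
      have "psh_act (prod_psh Ipsh B2) m' n \<phi> (delta 0 n (), E n p) = (delta 0 m' (), E m' (psh_act ?IB m' n \<phi> p))"
        using actB2[OF p] delta_nat'[OF phi] by simp
      then show "K m' (psh_act ?IB m' n \<phi> p) = psh_act Y m' n \<phi> (K n p)"
        unfolding K_def using nat_act[OF H2n phi mem] by simp
    qed
  next
    fix n b assume b: "b \<in> psh_obj B n"
    have ms: "(r n b, b) \<in> MS n" using b rB by (auto simp: MS_def)
    show "K n (r n b, b) = uB n b" unfolding K_def H2C'[OF d0 ms] C1[OF ms refl] h1a[OF b] ..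
  next
    fix n c assume c: "c \<in> psh_obj (prod_psh Ipsh A) n"
    then obtain i a where ia: "c = (i, a)" "i \<in> hom n (Suc 0)" "a \<in> psh_obj A n" by auto
    have ms: "(i, m n a) \<in> MS n" using ia mA by (auto simp: MS_def)
    show "K n ((\<lambda>n (i, a). (i, m n a)) n c) = uI n c"
      unfolding ia(1) K_def using H2C'[OF d0 ms] C2[OF ms d0 ia(3) refl] jn_d0'[OF ia(2)] by simp
  next
    fix n p assume p: "p \<in> psh_obj ?IB n"
    then obtain i b where ib: "p = (i, b)" "i \<in> hom n (Suc 0)" "b \<in> psh_obj B n" by auto
    have mem: "(delta 0 n (), E n p) \<in> psh_obj (prod_psh Ipsh B2) n" using p d0 objB2 by auto
    show "f n (K n p) = v n p"
      unfolding K_def using H2f mem dE'[OF ib(2,3)] jn_d0'[OF ib(2)] ib(1) by (simp add: V2_def)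
  qed
qed

lemma b_to_unb:
  fixes Y X A B :: "'a psh" and f m :: "nat \<Rightarrow> 'a \<Rightarrow> 'a" and r :: "nat \<Rightarrow> 'a \<Rightarrow> nat set \<Rightarrow> nat set"
  assumes inf: "infinite (UNIV :: 'a set)" and fn: "is_nat Y X f"
    and RL: "rlp_delta_pp Y X f" and A: "is_psh A" and B: "is_psh B"
    and rn: "is_nat B Ipsh r" and mm: "is_mono A B m"
  shows "lifts2 A B (prod_psh Ipsh A) m (\<lambda>n a. (r n (m n a), a)) (prod_psh Ipsh B)
      (\<lambda>n b. (r n b, b)) (\<lambda>n (i, a). (i, m n a)) Y X f"
  unfolding lifts2_def
proof (intro allI impI)
  fix uB uI v
  assume H: "is_nat B Y uB \<and> is_nat (prod_psh Ipsh A) Y uI \<and>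
       (\<forall>n a. a \<in> psh_obj A n \<longrightarrow> uB n (m n a) = uI n (r n (m n a), a)) \<and>
       is_nat (prod_psh Ipsh B) X v \<and>
       (\<forall>n b. b \<in> psh_obj B n \<longrightarrow> f n (uB n b) = v n (r n b, b)) \<and>
       (\<forall>n c. c \<in> psh_obj (prod_psh Ipsh A) n \<longrightarrow> f n (uI n c) = v n ((\<lambda>n (i, a). (i, m n a)) n c))"
  have uBn: "is_nat B Y uB" and uIn: "is_nat (prod_psh Ipsh A) Y uI" and vn: "is_nat (prod_psh Ipsh B) X v"
    using H by blast+
  have cmp: "\<And>n a. a \<in> psh_obj A n \<Longrightarrow> uB n (m n a) = uI n (r n (m n a), a)" using H by blast
  have fB: "\<And>n b. b \<in> psh_obj B n \<Longrightarrow> f n (uB n b) = v n (r n b, b)" using H by blast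
  have fI: "\<And>n i a. i \<in> hom n (Suc 0) \<Longrightarrow> a \<in> psh_obj A n \<Longrightarrow> f n (uI n (i, a)) = v n (i, m n a)"
    using H by auto
  have mn: "is_nat A B m" and minj: "\<And>n. inj_on (m n) (psh_obj A n)" using mm by (auto simp: is_mono_def)
  have mA: "\<And>n a. a \<in> psh_obj A n \<Longrightarrow> m n a \<in> psh_obj B n" using mn by (rule nat_obj)
  have rB: "\<And>n b. b \<in> psh_obj B n \<Longrightarrow> r n b \<in> hom n (Suc 0)" using rn nat_obj by fastforce
  have ract: "\<And>m' n \<phi> b. \<phi> \<in> hom m' n \<Longrightarrow> b \<in> psh_obj B n \<Longrightarrow>
     r m' (psh_act B m' n \<phi> b) = compose (Cube m') (r n b) \<phi>"
    using rn nat_act by fastforce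
  have mact: "\<And>m' n \<phi> a. \<phi> \<in> hom m' n \<Longrightarrow> a \<in> psh_obj A n \<Longrightarrow>
     m m' (psh_act A m' n \<phi> a) = psh_act B m' n \<phi> (m n a)"
    using mn nat_act by fastforce
  have L1: "lifts2 (prod_psh one_psh A) (prod_psh one_psh B) (prod_psh Ipsh A)
      (\<lambda>n (x, x'). (x, m n x')) (\<lambda>n (x, x'). (delta 0 n x, x')) (prod_psh Ipsh B)
      (\<lambda>n (x, y'). (delta 0 n x, y')) (\<lambda>n (y, x'). (y, m n x')) Y X f"
    using RL A B mm lifts_pp[OF A mn, of 0] unfolding rlp_delta_pp_def by blast
  define uB' where "uB' n p = uB n (snd p)" for n and p :: "unit \<times> 'a"
  define uC where "uC n p = uI n (jn n (fst p) (r n (m n (snd p))), snd p)" for n p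
  define V where "V n p = v n (jn n (fst p) (r n (snd p)), snd p)" for n p
  have uB'n: "is_nat (prod_psh one_psh B) Y uB'"
    using uBn unfolding is_nat_def uB'_def by auto
  have uCn: "is_nat (prod_psh Ipsh A) Y uC"
    unfolding is_nat_def
  proof (intro conjI allI impI)
    fix n p assume p: "p \<in> psh_obj (prod_psh Ipsh A) n"
    then show "uC n p \<in> psh_obj Y n"
      unfolding uC_def using uIn[THEN nat_obj] jn_hom' rB mA by auto
  next
    fix m' n \<phi> p assume phi: "\<phi> \<in> hom m' n" and p: "p \<in> psh_obj (prod_psh Ipsh A) n"
    obtain i a where ia: "p = (i, a)" "i \<in> hom n (Suc 0)" "a \<in> psh_obj A n" using p by auto
    have mem: "(jn n i (r n (m n a)), a) \<in> psh_obj (prod_psh Ipsh A) n" using ia jn_hom' rB mA by auto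
    have "uC m' (psh_act (prod_psh Ipsh A) m' n \<phi> p) =
          uI m' (jn m' (compose (Cube m') i \<phi>) (r m' (m m' (psh_act A m' n \<phi> a))), psh_act A m' n \<phi> a)"
      unfolding ia uC_def by simp
    also have "\<dots> = uI m' (psh_act (prod_psh Ipsh A) m' n \<phi> (jn n i (r n (m n a)), a))"
      using phi ia mact ract mA by (simp add: jn_nat)
    also have "\<dots> = psh_act Y m' n \<phi> (uC n p)"
      unfolding ia uC_def using nat_act[OF uIn phi mem] by simp
    finally show "uC m' (psh_act (prod_psh Ipsh A) m' n \<phi> p) = psh_act Y m' n \<phi> (uC n p)" .
  qed
  have Vn: "is_nat (prod_psh Ipsh B) X V"
    unfolding is_nat_def
  proof (intro conjI allI impI)
    fix n p assume p: "p \<in> psh_obj (prod_psh Ipsh B) n"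
    then show "V n p \<in> psh_obj X n"
      unfolding V_def using vn[THEN nat_obj] jn_hom' rB by auto
  next
    fix m' n \<phi> p assume phi: "\<phi> \<in> hom m' n" and p: "p \<in> psh_obj (prod_psh Ipsh B) n"
    obtain i b where ib: "p = (i, b)" "i \<in> hom n (Suc 0)" "b \<in> psh_obj B n" using p by auto
    have mem: "(jn n i (r n b), b) \<in> psh_obj (prod_psh Ipsh B) n" using ib jn_hom' rB by auto
    have "V m' (psh_act (prod_psh Ipsh B) m' n \<phi> p) =
          v m' (jn m' (compose (Cube m') i \<phi>) (r m' (psh_act B m' n \<phi> b)), psh_act B m' n \<phi> b)"
      unfolding ib V_def by simp
    also have "\<dots> = v m' (psh_act (prod_psh Ipsh B) m' n \<phi> (jn n i (r n b), b))"
      using phi ib ract by (simp add: jn_nat)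
    also have "\<dots> = psh_act X m' n \<phi> (V n p)"
      unfolding ib V_def using nat_act[OF vn phi mem] by simp
    finally show "V m' (psh_act (prod_psh Ipsh B) m' n \<phi> p) = psh_act X m' n \<phi> (V n p)" .
  qed
  have c1: "\<forall>n a. a \<in> psh_obj (prod_psh one_psh A) n \<longrightarrow>
          uB' n ((\<lambda>n (x, x'). (x, m n x')) n a) = uC n ((\<lambda>n (x, x'). (delta 0 n x, x')) n a)"
    using cmp rB mA by (auto simp: uB'_def uC_def jn_d0')
  have c2: "\<forall>n b. b \<in> psh_obj (prod_psh one_psh B) n \<longrightarrow>
          f n (uB' n b) = V n ((\<lambda>n (x, y'). (delta 0 n x, y')) n b)"
    using fB rB by (auto simp: uB'_def V_def jn_d0')
  have c3: "\<forall>n c. c \<in> psh_obj (prod_psh Ipsh A) n \<longrightarrow>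
          f n (uC n c) = V n ((\<lambda>n (y, x'). (y, m n x')) n c)"
    using fI rB mA jn_hom' by (auto simp: uC_def V_def)
  obtain h1 where h1n: "is_nat (prod_psh Ipsh B) Y h1"
    and h1B: "\<forall>n b. b \<in> psh_obj (prod_psh one_psh B) n \<longrightarrow> h1 n ((\<lambda>n (x, y'). (delta 0 n x, y')) n b) = uB' n b"
    and h1C: "\<forall>n c. c \<in> psh_obj (prod_psh Ipsh A) n \<longrightarrow> h1 n ((\<lambda>n (y, x'). (y, m n x')) n c) = uC n c"
    and h1f: "\<forall>n d. d \<in> psh_obj (prod_psh Ipsh B) n \<longrightarrow> f n (h1 n d) = V n d"
    by (rule L1[unfolded lifts2_def, rule_format, of uB' uC V, THEN exE])
       (use uB'n uCn Vn c1 c2 c3 in blast)+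
  have h1a: "\<And>n b. b \<in> psh_obj B n \<Longrightarrow> h1 n (delta 0 n (), b) = uB n b"
    using h1B by (auto simp: uB'_def)
  have h1b: "\<And>n i a. i \<in> hom n (Suc 0) \<Longrightarrow> a \<in> psh_obj A n \<Longrightarrow>
      h1 n (i, m n a) = uI n (jn n i (r n (m n a)), a)"
    using h1C by (auto simp: uC_def)
  have h1c: "\<And>n i b. i \<in> hom n (Suc 0) \<Longrightarrow> b \<in> psh_obj B n \<Longrightarrow>
      f n (h1 n (i, b)) = v n (jn n i (r n b), b)"
    using h1f by (auto simp: V_def)
  show "\<exists>k. is_nat (prod_psh Ipsh B) Y k \<and> (\<forall>n b. b \<in> psh_obj B n \<longrightarrow> k n (r n b, b) = uB n b) \<and>
          (\<forall>n c. c \<in> psh_obj (prod_psh Ipsh A) n \<longrightarrow> k n ((\<lambda>n (i, a). (i, m n a)) n c) = uI n c) \<and>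
          (\<forall>n d. d \<in> psh_obj (prod_psh Ipsh B) n \<longrightarrow> f n (k n d) = v n d)"
    by (rule step2[OF inf RL A B rn mm uIn vn fI h1n h1a h1b h1c])
qed

theorem mainTheorem3:
  fixes Y X :: "'a psh" and f :: "nat \<Rightarrow> 'a \<Rightarrow> 'a"
  assumes "infinite (UNIV :: 'a set)"
    and "is_psh Y" and "is_psh X" and "is_nat Y X f"
  shows "rlp_delta_pp Y X f \<longleftrightarrow> unbiased_fibration Y X f"
proof
  assume RL: "rlp_delta_pp Y X f"
  show "unbiased_fibration Y X f"
    unfolding unbiased_fibration_def
  proof (intro allI impI)
    fix A B :: "'a psh" and r m
    assume H: "is_psh A \<and> is_psh B \<and> is_nat B Ipsh r \<and> is_mono A B m"
    then have mn: "is_nat A B m" by (simp add: is_mono_def)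
    show "lifts (Mr A B r m) (prod_psh Ipsh B) (rB_map r m) Y X f"
      unfolding lifts_Mr[OF conjunct1[OF H] conjunct1[OF conjunct2[OF conjunct2[OF H]]] mn]
      using b_to_unb[OF assms(1) assms(4) RL] H by blast
  qed
next
  assume U: "unbiased_fibration Y X f"
  show "rlp_delta_pp Y X f"
    unfolding rlp_delta_pp_def using unb_to_b[OF U] by blast
qed

end
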